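(* Let $\Gamma=\langle V,(w_u)_{u\in V},\alpha,1\rangle$ be a celebrity game with critical distance $\beta=1$. Then $PoA(\Gamma)\le 2$. Moreover, for any two Nash equilibria $S,S'$ of $\Gamma$, $C(S)\le 2\,C(S')$.
   Context: A celebrity game $\Gamma=\langle V,(w_u)_{u\in V},\alpha,\beta\rangle$ consists of a set of players $V=\{1,\dots,n\}$, celebrity weights $w_u>0$, a link cost $\alpha>0$ and a critical distance $\beta$ with $1\le\beta\le n-1$. A strategy of player $u$ is a set $S_u\subseteq V\setminus\{u\}$; a strategy profile is $S=(S_1,\dots,S_n)$; its outcome graph $G[S]$ is the undirected graph on $V$ with edge set $\{\{u,v\}: u\in S_v\text{ or }v\in S_u\}$. With $d_G$ the graph distance (infinite between different connected components), the cost of player $u$ is $c_u(S)=\alpha|S_u|+\sum_{v:\,d_{G[S]}(u,v)>\beta}w_v$ and the social cost is $C(S)=\sum_{u\in V}c_u(S)$. $S$ is a Nash equilibrium if no player can strictly decrease its cost by changing only its own strategy. $\mathrm{opt}(\Gamma)=\min_S C(S)$ and $PoA(\Gamma)=\max_{S\text{ Nash equilibrium}}C(S)/\mathrm{opt}(\Gamma)$. *)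

theory Defs
  imports Complex_Main
begin

definition players :: "nat \<Rightarrow> nat set" where
  "players n = {1..n}"

definition valid_profile :: "nat \<Rightarrow> (nat \<Rightarrow> nat set) \<Rightarrow> bool" where
  "valid_profile n S \<longleftrightarrow> (\<forall>u\<in>players n. S u \<subseteq> players n - {u}) \<and> (\<forall>u. u \<notin> players n \<longrightarrow> S u = {})"

definition adj :: "nat \<Rightarrow> (nat \<Rightarrow> nat set) \<Rightarrow> nat \<Rightarrow> nat \<Rightarrow> bool" where
  "adj n S u v \<longleftrightarrow> u \<in> players n \<and> v \<in> players n \<and> u \<noteq> v \<and> (u \<in> S v \<or> v \<in> S u)"

fun within_dist :: "nat \<Rightarrow> (nat \<Rightarrow> nat set) \<Rightarrow> nat \<Rightarrow> nat \<Rightarrow> nat \<Rightarrow> bool" where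
  "within_dist n S 0 u v \<longleftrightarrow> u = v"
| "within_dist n S (Suc k) u v \<longleftrightarrow> within_dist n S k u v \<or> (\<exists>x. within_dist n S k u x \<and> adj n S x v)"

definition player_cost ::
  "nat \<Rightarrow> (nat \<Rightarrow> real) \<Rightarrow> real \<Rightarrow> nat \<Rightarrow> (nat \<Rightarrow> nat set) \<Rightarrow> nat \<Rightarrow> real" where
  "player_cost n w \<alpha> \<beta> S u =
     \<alpha> * real (card (S u)) + (\<Sum>v\<in>{v\<in>players n. \<not> within_dist n S \<beta> u v}. w v)"

definition social_cost ::
  "nat \<Rightarrow> (nat \<Rightarrow> real) \<Rightarrow> real \<Rightarrow> nat \<Rightarrow> (nat \<Rightarrow> nat set) \<Rightarrow> real" where
  "social_cost n w \<alpha> \<beta> S = (\<Sum>u\<in>players n. player_cost n w \<alpha> \<beta> S u)"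

definition nash_eq ::
  "nat \<Rightarrow> (nat \<Rightarrow> real) \<Rightarrow> real \<Rightarrow> nat \<Rightarrow> (nat \<Rightarrow> nat set) \<Rightarrow> bool" where
  "nash_eq n w \<alpha> \<beta> S \<longleftrightarrow> valid_profile n S \<and>
     (\<forall>u\<in>players n. \<forall>T. T \<subseteq> players n - {u} \<longrightarrow>
        player_cost n w \<alpha> \<beta> S u \<le> player_cost n w \<alpha> \<beta> (S(u := T)) u)"

definition opt :: "nat \<Rightarrow> (nat \<Rightarrow> real) \<Rightarrow> real \<Rightarrow> nat \<Rightarrow> real" where
  "opt n w \<alpha> \<beta> = Inf {social_cost n w \<alpha> \<beta> S | S. valid_profile n S}"

end

theory Submission
  imports Defs
begin

definition fc :: "(nat \<Rightarrow> real) \<Rightarrow> real \<Rightarrow> (nat \<Rightarrow> nat set) \<Rightarrow> nat \<Rightarrow> nat \<Rightarrow> real" where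
  "fc w \<alpha> S u x = \<alpha> * (if x \<in> S u then 1 else 0) + (if x \<in> S u \<or> u \<in> S x then 0 else w x)"

lemma wd1: "within_dist n S 1 u v \<longleftrightarrow> u = v \<or> adj n S u v"
  by auto

lemma pc_expand:
  assumes u: "u \<in> players n" and Su: "S u \<subseteq> players n - {u}"
  shows "player_cost n w \<alpha> 1 S u = (\<Sum>x\<in>players n - {u}. fc w \<alpha> S u x)"
proof -
  have fin: "finite (players n)" by (simp add: players_def)
  have "\<alpha> * real (card (S u)) = (\<Sum>x\<in>players n - {u}. \<alpha> * (if x \<in> S u then 1 else 0))"
  proof -
    have "(\<Sum>x\<in>players n - {u}. (if x \<in> S u then 1 else 0::real)) = real (card (S u))"
      using Su fin by (simp add: sum.If_cases Int_absorb1)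
    then show ?thesis by (simp add: sum_distrib_left[symmetric])
  qed
  moreover have "{v\<in>players n. \<not> within_dist n S 1 u v} = {x\<in>players n - {u}. \<not> (x \<in> S u \<or> u \<in> S x)}"
    using u by (auto simp: adj_def)
  moreover have "(\<Sum>v\<in>{x\<in>players n - {u}. \<not> (x \<in> S u \<or> u \<in> S x)}. w v)
      = (\<Sum>x\<in>players n - {u}. (if x \<in> S u \<or> u \<in> S x then 0 else w x))"
    using fin by (simp add: sum.If_cases Diff_eq Int_def conj_commute)
  ultimately show ?thesis
    unfolding player_cost_def fc_def by (simp add: sum.distrib)
qed

lemma sc_expand:
  assumes "valid_profile n S"
  shows "social_cost n w \<alpha> 1 S = (\<Sum>u\<in>players n. \<Sum>x\<in>players n. if x = u then 0 else fc w \<alpha> S u x)"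
proof -
  have fin: "finite (players n)" by (simp add: players_def)
  show ?thesis unfolding social_cost_def
  proof (rule sum.cong[OF refl])
    fix u assume u: "u \<in> players n"
    have "player_cost n w \<alpha> 1 S u = (\<Sum>x\<in>players n - {u}. fc w \<alpha> S u x)"
      using pc_expand[OF u] assms unfolding valid_profile_def using u by blast
    also have "\<dots> = (\<Sum>x\<in>players n. if x = u then 0 else fc w \<alpha> S u x)"
      using fin u by (simp add: sum.If_cases Diff_eq Int_commute)
    finally show "player_cost n w \<alpha> 1 S u = (\<Sum>x\<in>players n. if x = u then 0 else fc w \<alpha> S u x)" .
  qed
qed

lemma sc_sym:
  assumes "valid_profile n S"
  shows "2 * social_cost n w \<alpha> 1 S = (\<Sum>u\<in>players n. \<Sum>x\<in>players n. if x = u then 0 else fc w \<alpha> S u x + fc w \<alpha> S x u)"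
proof -
  let ?F = "\<lambda>u x. if x = u then 0 else fc w \<alpha> S u x"
  have "(\<Sum>u\<in>players n. \<Sum>x\<in>players n. ?F u x) = (\<Sum>x\<in>players n. \<Sum>u\<in>players n. ?F u x)"
    by (rule sum.swap)
  hence "2 * social_cost n w \<alpha> 1 S = (\<Sum>u\<in>players n. \<Sum>x\<in>players n. ?F u x) + (\<Sum>u\<in>players n. \<Sum>x\<in>players n. ?F x u)"
    using sc_expand[OF assms] by simp
  also have "\<dots> = (\<Sum>u\<in>players n. \<Sum>x\<in>players n. ?F u x + ?F x u)"
    by (simp add: sum.distrib)
  also have "\<dots> = (\<Sum>u\<in>players n. \<Sum>x\<in>players n. if x = u then 0 else fc w \<alpha> S u x + fc w \<alpha> S x u)"
    by (intro sum.cong) auto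
  finally show ?thesis .
qed

lemma pair_lower:
  assumes "\<alpha> > 0" "w u > 0" "w x > 0"
  shows "min \<alpha> (w u + w x) \<le> fc w \<alpha> S u x + fc w \<alpha> S x u"
  using assms unfolding fc_def by (auto simp: min_def)

lemma ne_local:
  assumes ne: "nash_eq n w \<alpha> 1 S" and u: "u \<in> players n" and v: "v \<in> players n" "v \<noteq> u"
  shows "fc w \<alpha> S u v \<le> \<alpha> * (if v \<in> S u then 0 else 1) + (if v \<notin> S u \<or> u \<in> S v then 0 else w v)"
proof -
  have vp: "valid_profile n S" using ne nash_eq_def by blast
  have Su: "S u \<subseteq> players n - {u}" using vp u unfolding valid_profile_def by blast
  define T where "T = (if v \<in> S u then S u - {v} else insert v (S u))"
  have T: "T \<subseteq> players n - {u}" using Su v unfolding T_def by auto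
  have le: "player_cost n w \<alpha> 1 S u \<le> player_cost n w \<alpha> 1 (S(u := T)) u"
    using ne u T unfolding nash_eq_def by blast
  have fin: "finite (players n - {u})" by (simp add: players_def)
  have e1: "player_cost n w \<alpha> 1 S u = fc w \<alpha> S u v + (\<Sum>x\<in>players n - {u} - {v}. fc w \<alpha> S u x)"
    using pc_expand[of u n S w \<alpha>, OF u Su] v fin by (simp add: sum.remove)
  have e2: "player_cost n w \<alpha> 1 (S(u := T)) u = fc w \<alpha> (S(u := T)) u v + (\<Sum>x\<in>players n - {u} - {v}. fc w \<alpha> (S(u := T)) u x)"
    using pc_expand[OF u, of "S(u := T)"] T v fin by (simp add: sum.remove)
  have e3: "(\<Sum>x\<in>players n - {u} - {v}. fc w \<alpha> (S(u := T)) u x) = (\<Sum>x\<in>players n - {u} - {v}. fc w \<alpha> S u x)"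
    by (rule sum.cong) (auto simp: fc_def T_def)
  have e4: "fc w \<alpha> (S(u := T)) u v = \<alpha> * (if v \<in> S u then 0 else 1) + (if v \<notin> S u \<or> u \<in> S v then 0 else w v)"
    using v by (auto simp: fc_def T_def)
  show ?thesis using le e1 e2 e3 e4 by linarith
qed

lemma pair_upper:
  assumes ne: "nash_eq n w \<alpha> 1 S" and u: "u \<in> players n" and v: "v \<in> players n" "v \<noteq> u"
    and a: "\<alpha> > 0" and wu: "w u > 0" and wv: "w v > 0"
  shows "fc w \<alpha> S u v + fc w \<alpha> S v u \<le> 2 * min \<alpha> (w u + w v)"
proof -
  have 1: "fc w \<alpha> S u v \<le> \<alpha> * (if v \<in> S u then 0 else 1) + (if v \<notin> S u \<or> u \<in> S v then 0 else w v)"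
    by (rule ne_local[OF ne u v])
  have 2: "fc w \<alpha> S v u \<le> \<alpha> * (if u \<in> S v then 0 else 1) + (if u \<notin> S v \<or> v \<in> S u then 0 else w u)"
    using ne_local[OF ne v(1) u] v(2) by auto
  show ?thesis using 1 2 a wu wv unfolding fc_def
    by (auto simp: min_def split: if_splits)
qed

theorem theorem5:
  fixes n :: nat and w :: "nat \<Rightarrow> real" and \<alpha> :: real
  assumes "\<forall>u\<in>players n. w u > 0" and "\<alpha> > 0" and "1 \<le> n - 1"
  shows "(\<forall>S. nash_eq n w \<alpha> 1 S \<longrightarrow> social_cost n w \<alpha> 1 S / opt n w \<alpha> 1 \<le> 2)
       \<and> (\<forall>S S'. nash_eq n w \<alpha> 1 S \<and> nash_eq n w \<alpha> 1 S' \<longrightarrow>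
            social_cost n w \<alpha> 1 S \<le> 2 * social_cost n w \<alpha> 1 S')"
proof -
  note wpos = assms(1) and apos = assms(2)
  define M where "M = (\<Sum>u\<in>players n. \<Sum>x\<in>players n. if x = u then 0 else min \<alpha> (w u + w x))"
  have low: "M \<le> 2 * social_cost n w \<alpha> 1 S" if vp: "valid_profile n S" for S
    unfolding sc_sym[OF vp] M_def
    by (intro sum_mono) (use pair_lower apos wpos in auto)
  have up: "2 * social_cost n w \<alpha> 1 S \<le> 2 * M" if ne: "nash_eq n w \<alpha> 1 S" for S
  proof -
    have vp: "valid_profile n S" using ne nash_eq_def by blast
    have "2 * M = (\<Sum>u\<in>players n. \<Sum>x\<in>players n. if x = u then 0 else 2 * min \<alpha> (w u + w x))"
      unfolding M_def by (simp add: sum_distrib_left if_distrib cong: if_cong)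
    then show ?thesis unfolding sc_sym[OF vp]
      by (simp only:) (intro sum_mono, use pair_upper[OF ne] apos wpos in auto)
  qed
  have fin: "finite (players n)" by (simp add: players_def)
  have Mpos: "M > 0"
  proof -
    have p1: "1 \<in> players n" and p2: "2 \<in> players n" using assms(3) by (auto simp: players_def)
    have nn0: "\<And>u x. u \<in> players n \<Longrightarrow> x \<in> players n \<Longrightarrow> 0 \<le> (if x = u then 0 else min \<alpha> (w u + w x))"
      using apos wpos by (fastforce simp: min_def intro: add_nonneg_nonneg less_imp_le)
    have nn: "\<And>u. u \<in> players n \<Longrightarrow> \<forall>x\<in>players n - {2}. 0 \<le> (if x = u then 0 else min \<alpha> (w u + w x))"
      using nn0 by blast
    have nn': "\<And>u. u \<in> players n \<Longrightarrow> 0 \<le> (\<Sum>x\<in>players n. if x = u then 0 else min \<alpha> (w u + w x))"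
      by (intro sum_nonneg nn0)
    have "(if (2::nat) = 1 then 0 else min \<alpha> (w 1 + w 2)) \<le> (\<Sum>x\<in>players n. if x = 1 then 0 else min \<alpha> (w 1 + w x))"
      by (rule member_le_sum[OF p2 _ fin]) (use nn[OF p1] in blast)
    moreover have "(\<Sum>x\<in>players n. if x = 1 then 0 else min \<alpha> (w 1 + w x)) \<le> M"
      unfolding M_def by (rule member_le_sum[OF p1 _ fin]) (use nn' in blast)
    moreover have "min \<alpha> (w 1 + w 2) > 0"
    proof -
      have "w 1 > 0" "w 2 > 0" using wpos p1 p2 by blast+
      then show ?thesis using apos by simp
    qed
    moreover have "(if (2::nat) = 1 then 0 else min \<alpha> (w 1 + w 2)) = min \<alpha> (w 1 + w 2)" by simp
    ultimately show ?thesis by linarith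
  qed
  have optge: "M / 2 \<le> opt n w \<alpha> 1"
    unfolding opt_def
  proof (rule cInf_greatest)
    have "valid_profile n (\<lambda>_. {})" by (simp add: valid_profile_def)
    then show "{social_cost n w \<alpha> 1 S |S. valid_profile n S} \<noteq> {}" by blast
  next
    fix c assume "c \<in> {social_cost n w \<alpha> 1 S |S. valid_profile n S}"
    then obtain S where "valid_profile n S" "c = social_cost n w \<alpha> 1 S" by blast
    then show "M / 2 \<le> c" using low[of S] by simp
  qed
  have A: "social_cost n w \<alpha> 1 S / opt n w \<alpha> 1 \<le> 2" if ne: "nash_eq n w \<alpha> 1 S" for S
  proof -
    have "opt n w \<alpha> 1 > 0" using optge Mpos by linarith
    moreover have "social_cost n w \<alpha> 1 S \<le> 2 * opt n w \<alpha> 1" using up[OF ne] optge by linarith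
    ultimately show ?thesis by (simp add: divide_le_eq)
  qed
  have B: "social_cost n w \<alpha> 1 S \<le> 2 * social_cost n w \<alpha> 1 S'"
    if "nash_eq n w \<alpha> 1 S" "nash_eq n w \<alpha> 1 S'" for S S'
  proof -
    have "valid_profile n S'" using that(2) nash_eq_def by blast
    then show ?thesis using up[OF that(1)] low by fastforce
  qed
  show ?thesis using A B by blast
qed

end
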